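(* Let $\xi_m>0$, $0\le\mu\le\xi_m$, and for $\Delta\ge0$, $T>0$ define $$f(\mu,\Delta,T)=2T\ln\frac{\cosh(\sqrt{\xi_m^2+\Delta^2}/2T)}{\cosh(\sqrt{\mu^2+\Delta^2}/2T)}+\mu\int_0^{\mu}\tanh\Big(\frac{\sqrt{\xi^2+\Delta^2}}{2T}\Big)\frac{d\xi}{\sqrt{\xi^2+\Delta^2}}$$ (with the integrand at $\Delta=0$ read as $\tanh(\xi/2T)/\xi$). Then for $\Delta>0$, $T>0$ and $\mu\in(0,\xi_m)$: $\partial f/\partial\mu>0$, $\partial f/\partial\Delta<0$, $\partial f/\partial T<0$. Moreover $\lim_{T\to\infty}f(\mu,\Delta,T)=0$ and $\lim_{\Delta\to\infty}f(\mu,\Delta,T)=0$ for fixed $T>0$. *)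

theory Defs
  imports "HOL-Analysis.Analysis"
begin

text \<open>The function f(mu, Delta, T) for cutoff xi_m. The integrand at Delta = 0
 is tanh(xi/2T)/xi; the value at the single point xi = 0 is irrelevant to the integral.\<close>
definition fgap :: "real \<Rightarrow> real \<Rightarrow> real \<Rightarrow> real \<Rightarrow> real" where
  "fgap \<xi>m \<mu> \<Delta> T =
     2 * T * ln (cosh (sqrt (\<xi>m\<^sup>2 + \<Delta>\<^sup>2) / (2 * T)) / cosh (sqrt (\<mu>\<^sup>2 + \<Delta>\<^sup>2) / (2 * T)))
     + \<mu> * integral {0..\<mu>} (\<lambda>\<xi>. tanh (sqrt (\<xi>\<^sup>2 + \<Delta>\<^sup>2) / (2 * T)) / sqrt (\<xi>\<^sup>2 + \<Delta>\<^sup>2))"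

end

theory Submission
  imports Defs
begin


lemma sinh_cosh_gt: "x > 0 \<Longrightarrow> x < sinh x * cosh (x::real)"
proof -
  assume x: "x > 0"
  have "(\<lambda>t. sinh t * cosh t - t) 0 < (\<lambda>t. sinh t * cosh t - t) x"
  proof (rule DERIV_pos_imp_increasing_open[OF x])
    fix t :: real assume t: "0 < t" "t < x"
    show "\<exists>y. DERIV (\<lambda>t. sinh t * cosh t - t) t :> y \<and> y > 0"
      apply (rule exI[of _ "2 * sinh t ^ 2"])
      apply (rule conjI)
       apply (rule derivative_eq_intros refl)+
      using t cosh_square_eq[of t] by (auto simp: power2_eq_square)
  qed (intro continuous_intros)
  then show ?thesis by simp
qed

lemma one_minus_tanh_sq: "1 - tanh (x::real) ^ 2 = 1 / cosh x ^ 2"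
proof -
  have c: "cosh x ^ 2 \<noteq> 0" by simp
  have "1 - tanh x ^ 2 = (cosh x ^ 2 - sinh x ^ 2) / cosh x ^ 2"
    using c by (simp add: tanh_def power_divide field_simps)
  then show ?thesis using cosh_square_eq[of x] by simp
qed

lemma one_minus_tanh_sq_pos: "1 - tanh (x::real) ^ 2 > 0"
  by (simp add: one_minus_tanh_sq)

lemma keyA: "x > 0 \<Longrightarrow> x * (1 - tanh x ^ 2) < tanh (x::real)"
proof -
  assume x: "x > 0"
  have c: "cosh x > 0" by simp
  have "x < sinh x * cosh x" using sinh_cosh_gt[OF x] .
  then have "x / cosh x ^ 2 < sinh x / cosh x"
    using c by (simp add: field_simps power2_eq_square)
  then show ?thesis unfolding one_minus_tanh_sq by (simp add: tanh_def)
qed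

lemma tanh_div_decr: "0 < x \<Longrightarrow> x < y \<Longrightarrow> tanh y / y < tanh x / (x::real)"
proof -
  assume x: "0 < x" "x < y"
  show ?thesis
  proof (rule DERIV_neg_imp_decreasing_open[OF x(2)])
    fix t assume t: "x < t" "t < y"
    show "\<exists>D. DERIV (\<lambda>t. tanh t / t) t :> D \<and> D < 0"
      apply (rule exI[of _ "(t * (1 - tanh t ^ 2) - tanh t) / t^2"])
      apply (rule conjI)
       apply (rule derivative_eq_intros refl | simp)+
      using t x keyA[of t] by (auto simp: field_simps power2_eq_square)
  qed (use x in \<open>intro continuous_intros; auto\<close>)
qed

lemma kdecr: "0 \<le> x \<Longrightarrow> x < y \<Longrightarrow> ln (cosh y) - y * tanh y < ln (cosh x) - x * tanh (x::real)"
proof -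
  assume x: "0 \<le> x" "x < y"
  show ?thesis
  proof (rule DERIV_neg_imp_decreasing_open[OF x(2)])
    fix t assume t: "x < t" "t < y"
    show "\<exists>D. DERIV (\<lambda>t. ln (cosh t) - t * tanh t) t :> D \<and> D < 0"
      apply (rule exI[of _ "- t * (1 - tanh t ^ 2)"])
      apply (rule conjI)
       apply (rule derivative_eq_intros refl | simp)+
      using t x one_minus_tanh_sq_pos[of t] by (auto simp: tanh_def field_simps power2_eq_square)
  qed (intro continuous_intros; auto)
qed

lemma lncosh_le: "0 \<le> x \<Longrightarrow> ln (cosh x) \<le> x * tanh (x::real)"
  using kdecr[of 0 x] by (cases "x = 0") auto

lemma tanh_le_self: "0 \<le> x \<Longrightarrow> tanh x \<le> (x::real)"
proof -
  assume x: "0 \<le> x"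
  have "(\<lambda>t. t - tanh t) 0 \<le> (\<lambda>t. t - tanh t) x"
  proof (rule DERIV_nonneg_imp_increasing_open[OF x])
    fix t :: real assume t: "0 < t" "t < x"
    show "\<exists>y. DERIV (\<lambda>t. t - tanh t) t :> y \<and> y \<ge> 0"
      apply (rule exI[of _ "tanh t ^ 2"])
      apply (rule conjI)
       apply (rule derivative_eq_intros refl | simp)+
      done
  qed (intro continuous_intros; auto)
  then show ?thesis by simp
qed

lemma lncosh_mono: "0 \<le> y \<Longrightarrow> y \<le> x \<Longrightarrow> ln (cosh y) \<le> ln (cosh (x::real))"
proof -
  assume x: "0 \<le> y" "y \<le> x"
  show ?thesis
  proof (rule DERIV_nonneg_imp_increasing_open[OF x(2)])
    fix t :: real assume t: "y < t" "t < x"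
    show "\<exists>D. DERIV (\<lambda>t. ln (cosh t)) t :> D \<and> D \<ge> 0"
      apply (rule exI[of _ "tanh t"])
      apply (rule conjI)
       apply (rule derivative_eq_intros refl | simp)+
      using t x by (auto simp: tanh_def)
  qed (intro continuous_intros; auto)
qed

lemma lncosh_lip: "0 \<le> y \<Longrightarrow> y \<le> x \<Longrightarrow> ln (cosh x) - ln (cosh y) \<le> x - (y::real)"
proof -
  assume x: "0 \<le> y" "y \<le> x"
  have "(\<lambda>t. t - ln (cosh t)) y \<le> (\<lambda>t. t - ln (cosh t)) x"
  proof (rule DERIV_nonneg_imp_increasing_open[OF x(2)])
    fix t :: real assume t: "y < t" "t < x"
    show "\<exists>D. DERIV (\<lambda>t. t - ln (cosh t)) t :> D \<and> D \<ge> 0"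
      apply (rule exI[of _ "1 - tanh t"])
      apply (rule conjI)
       apply (rule derivative_eq_intros refl | simp)+
      using tanh_real_lt_1[of t] by (auto simp: tanh_def)
  qed (intro continuous_intros; auto)
  then show ?thesis by simp
qed

lemma lncosh_nonneg: "0 \<le> ln (cosh (x::real))"
proof -
  have "ln (cosh 0) \<le> ln (cosh \<bar>x\<bar>)" by (rule lncosh_mono) auto
  then show ?thesis by simp
qed



lemma deriv_mu:
  fixes \<xi>m \<mu> \<Delta> T :: real
  assumes D: "\<Delta> > 0" and T: "T > 0" and m: "0 < \<mu>" "\<mu> < \<xi>m"
  shows "((\<lambda>m. fgap \<xi>m m \<Delta> T) has_real_derivative
           integral {0..\<mu>} (\<lambda>\<xi>. tanh (sqrt (\<xi>\<^sup>2 + \<Delta>\<^sup>2) / (2 * T)) / sqrt (\<xi>\<^sup>2 + \<Delta>\<^sup>2))) (at \<mu>)"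
proof -
  define g where "g = (\<lambda>\<xi>. tanh (sqrt (\<xi>\<^sup>2 + \<Delta>\<^sup>2) / (2 * T)) / sqrt (\<xi>\<^sup>2 + \<Delta>\<^sup>2))"
  have pos: "\<And>x. sqrt (x\<^sup>2 + \<Delta>\<^sup>2) > 0" using D by (simp add: add_nonneg_pos)
  have cg: "continuous_on {0..\<xi>m} g" unfolding g_def
    using pos T by (intro continuous_intros) (auto simp: less_imp_neq[symmetric] )
  have Id: "((\<lambda>m. integral {0..m} g) has_real_derivative g \<mu>) (at \<mu>)"
    using integral_has_real_derivative[OF cg, of \<mu>] m at_within_Icc_at[of 0 \<mu> \<xi>m] by auto
  have eq: "(\<lambda>m. fgap \<xi>m m \<Delta> T) = (\<lambda>m. 2 * T * (ln (cosh (sqrt (\<xi>m\<^sup>2 + \<Delta>\<^sup>2) / (2 * T))) - ln (cosh (sqrt (m\<^sup>2 + \<Delta>\<^sup>2) / (2 * T)))) + m * integral {0..m} g)"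
    by (rule ext) (simp add: fgap_def ln_div g_def)
  show ?thesis unfolding eq g_def[symmetric]
    using m D T pos[of \<mu>] add_nonneg_nonneg[of "\<mu>\<^sup>2" "\<Delta>\<^sup>2"]
    apply (auto intro!: derivative_eq_intros Id)
    by (auto simp: g_def tanh_def field_simps)
qed


lemma int_neg:
  fixes h :: "real \<Rightarrow> real"
  assumes "continuous_on {0..\<mu>} h" "\<mu> > 0" "\<And>x. x \<in> {0..\<mu>} \<Longrightarrow> h x < 0"
  shows "integral {0..\<mu>} h < 0"
proof -
  obtain x0 where x0: "x0 \<in> {0..\<mu>}" "\<And>y. y \<in> {0..\<mu>} \<Longrightarrow> h y \<le> h x0"
    using continuous_attains_sup[of "{0..\<mu>}" h] assms by auto
  have "integral {0..\<mu>} h \<le> integral {0..\<mu>} (\<lambda>_. h x0)"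
    by (rule integral_le) (use assms x0 in \<open>auto intro: integrable_continuous_interval\<close>)
  also have "\<dots> = h x0 * \<mu>" using assms by simp
  also have "\<dots> < 0" using assms x0 by (simp add: mult_neg_pos)
  finally show ?thesis .
qed

lemma int_pos:
  fixes h :: "real \<Rightarrow> real"
  assumes "continuous_on {0..\<mu>} h" "\<mu> > 0" "\<And>x. x \<in> {0..\<mu>} \<Longrightarrow> h x > 0"
  shows "integral {0..\<mu>} h > 0"
proof -
  have "integral {0..\<mu>} (\<lambda>x. - h x) < 0"
    by (rule int_neg) (use assms in \<open>auto intro: continuous_intros\<close>)
  then show ?thesis by (simp add: integral_neg)
qed

lemma deriv_D:
  fixes \<xi>m \<mu> \<Delta> T :: real
  assumes D: "\<Delta> > 0" and T: "T > 0" and m: "0 < \<mu>" "\<mu> < \<xi>m"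
  shows "\<exists>D'. ((\<lambda>d. fgap \<xi>m \<mu> d T) has_real_derivative D') (at \<Delta>) \<and> D' < 0"
proof -
  define G where "G = (\<lambda>d \<xi>. tanh (sqrt (\<xi>\<^sup>2 + d\<^sup>2) / (2 * T)) / sqrt (\<xi>\<^sup>2 + d\<^sup>2))"
  define Gd where "Gd = (\<lambda>d \<xi>. (sqrt (\<xi>\<^sup>2 + d\<^sup>2) / (2 * T) * (1 - tanh (sqrt (\<xi>\<^sup>2 + d\<^sup>2) / (2 * T)) ^ 2)
       - tanh (sqrt (\<xi>\<^sup>2 + d\<^sup>2) / (2 * T))) * d / sqrt (\<xi>\<^sup>2 + d\<^sup>2) ^ 3)"
  define U where "U = {\<Delta>/2<..}"
  have pos: "\<And>x d. d > 0 \<Longrightarrow> sqrt (x\<^sup>2 + d\<^sup>2) > 0" by (simp add: add_nonneg_pos)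
  have Upos: "\<And>d. d \<in> U \<Longrightarrow> d > 0" using D by (auto simp: U_def)
  have fx: "((\<lambda>d. G d t) has_field_derivative Gd d t) (at d within U)" if "d \<in> U" for d t
  proof -
    have d: "d > 0" using Upos that .
    have alg: "\<And>s q th. s > 0 \<Longrightarrow> q = s^2 \<Longrightarrow>
       ((1 - th\<^sup>2) * (d * inverse s) * s / (2 * T) - th * (inverse s * d)) / q
        = (s / (2 * T) * (1 - th ^ 2) - th) * d / s ^ 3"
      using T by (auto simp: field_simps power2_eq_square power3_eq_cube)
    have "((\<lambda>d. G d t) has_field_derivative Gd d t) (at d)"
      unfolding G_def
      using pos[OF d, of t] d T add_nonneg_pos[of "t\<^sup>2" "d\<^sup>2"]
      apply (auto intro!: derivative_eq_intros)
      apply (rule trans[OF alg[of "sqrt (t\<^sup>2 + d\<^sup>2)" "t\<^sup>2 + d\<^sup>2"]])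
      using pos[OF d, of t] add_nonneg_nonneg[of "t\<^sup>2" "d\<^sup>2"] by (auto simp: Gd_def)
    then show ?thesis by (rule has_field_derivative_at_within)
  qed
  have int2: "G d integrable_on cbox 0 \<mu>" if "d \<in> U" for d
    unfolding G_def cbox_interval
    using Upos[OF that] T pos[OF Upos[OF that]]
    by (intro integrable_continuous_interval continuous_intros) (auto simp: less_imp_neq[symmetric])
  have cont: "continuous_on (U \<times> cbox 0 \<mu>) (\<lambda>(x, t). Gd x t)"
    unfolding Gd_def split_beta
    using T pos Upos
    by (intro continuous_intros) (auto simp: less_imp_neq[symmetric])
  have DU: "\<Delta> \<in> U" "convex U" "open U" using D by (auto simp: U_def)
  have L: "((\<lambda>d. integral (cbox 0 \<mu>) (G d)) has_field_derivative integral (cbox 0 \<mu>) (Gd \<Delta>)) (at \<Delta> within U)"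
    by (rule leibniz_rule_field_derivative[OF fx int2 cont DU(1,2)])
  then have L2: "((\<lambda>d. integral {0..\<mu>} (G d)) has_real_derivative integral {0..\<mu>} (Gd \<Delta>)) (at \<Delta>)"
    using at_within_open[OF DU(1,3)] by (simp add: cbox_interval)
  have Jneg: "integral {0..\<mu>} (Gd \<Delta>) < 0"
  proof (rule int_neg[OF _ m(1)])
    show "continuous_on {0..\<mu>} (Gd \<Delta>)"
      unfolding Gd_def using T pos D
      by (intro continuous_intros) (auto simp: less_imp_neq[symmetric])
    fix x assume "x \<in> {0..\<mu>}"
    have "sqrt (x\<^sup>2 + \<Delta>\<^sup>2) / (2 * T) > 0" using pos[OF D] T by simp
    from keyA[OF this] show "Gd \<Delta> x < 0"
      unfolding Gd_def using D pos[OF D, of x] by (simp add: mult_neg_pos divide_neg_pos)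
  qed
  define a where "a = sqrt (\<xi>m\<^sup>2 + \<Delta>\<^sup>2)"
  define b where "b = sqrt (\<mu>\<^sup>2 + \<Delta>\<^sup>2)"
  have apos: "a > 0" and bpos: "b > 0" using pos[OF D] by (auto simp: a_def b_def)
  have ab: "b < a" unfolding a_def b_def using m by (simp add: power_strict_mono)
  have H1: "((\<lambda>d. 2 * T * (ln (cosh (sqrt (\<xi>m\<^sup>2 + d\<^sup>2) / (2 * T))) - ln (cosh (sqrt (\<mu>\<^sup>2 + d\<^sup>2) / (2 * T)))))
      has_real_derivative \<Delta> * (tanh (a / (2 * T)) / a - tanh (b / (2 * T)) / b)) (at \<Delta>)"
    using D T apos bpos add_nonneg_pos[of "\<xi>m\<^sup>2" "\<Delta>\<^sup>2"] add_nonneg_pos[of "\<mu>\<^sup>2" "\<Delta>\<^sup>2"]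
    apply (auto intro!: derivative_eq_intros)
    by (simp add: a_def b_def tanh_def field_simps)
  have D1neg: "\<Delta> * (tanh (a / (2 * T)) / a - tanh (b / (2 * T)) / b) < 0"
  proof -
    have "tanh (a / (2 * T)) / (a / (2 * T)) < tanh (b / (2 * T)) / (b / (2 * T))"
      by (rule tanh_div_decr) (use T apos bpos ab in \<open>auto simp: divide_strict_right_mono\<close>)
    then have "tanh (a / (2 * T)) / a < tanh (b / (2 * T)) / b"
      using T apos bpos by (simp add: field_simps)
    then show ?thesis using D by (simp add: mult_pos_neg)
  qed
  have eq: "(\<lambda>d. fgap \<xi>m \<mu> d T) = (\<lambda>d. 2 * T * (ln (cosh (sqrt (\<xi>m\<^sup>2 + d\<^sup>2) / (2 * T))) - ln (cosh (sqrt (\<mu>\<^sup>2 + d\<^sup>2) / (2 * T)))) + \<mu> * integral {0..\<mu>} (G d))"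
    by (rule ext) (simp add: fgap_def ln_div G_def)
  have "((\<lambda>d. fgap \<xi>m \<mu> d T) has_real_derivative
          \<Delta> * (tanh (a / (2 * T)) / a - tanh (b / (2 * T)) / b) + \<mu> * integral {0..\<mu>} (Gd \<Delta>)) (at \<Delta>)"
    unfolding eq by (intro DERIV_add H1 DERIV_cmult L2)
  moreover have "\<Delta> * (tanh (a / (2 * T)) / a - tanh (b / (2 * T)) / b) + \<mu> * integral {0..\<mu>} (Gd \<Delta>) < 0"
    using D1neg Jneg m by (simp add: add_neg_neg mult_pos_neg)
  ultimately show ?thesis by blast
qed

lemma deriv_T:
  fixes \<xi>m \<mu> \<Delta> T :: real
  assumes D: "\<Delta> > 0" and T: "T > 0" and m: "0 < \<mu>" "\<mu> < \<xi>m"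
  shows "\<exists>D'. ((\<lambda>t. fgap \<xi>m \<mu> \<Delta> t) has_real_derivative D') (at T) \<and> D' < 0"
proof -
  define G where "G = (\<lambda>t \<xi>. tanh (sqrt (\<xi>\<^sup>2 + \<Delta>\<^sup>2) / (2 * t)) / sqrt (\<xi>\<^sup>2 + \<Delta>\<^sup>2))"
  define Gt where "Gt = (\<lambda>t \<xi>. - (1 - tanh (sqrt (\<xi>\<^sup>2 + \<Delta>\<^sup>2) / (2 * t)) ^ 2) / (2 * t ^ 2))"
  define U where "U = {T/2<..}"
  have pos: "\<And>x. sqrt (x\<^sup>2 + \<Delta>\<^sup>2) > 0" using D by (simp add: add_nonneg_pos)
  have Upos: "\<And>d. d \<in> U \<Longrightarrow> d > 0" using T by (auto simp: U_def)
  have fx: "((\<lambda>d. G d t) has_field_derivative Gt d t) (at d within U)" if "d \<in> U" for d t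
  proof -
    have d: "d > 0" using Upos that .
    have alg2: "\<And>s q th. 0 < q \<Longrightarrow> s * s = q \<Longrightarrow> - ((1 - th\<^sup>2) * s * s / (2 * (d * d) * q)) = (th\<^sup>2 - 1) / (2 * d\<^sup>2)"
      using d by (auto simp: field_simps power2_eq_square)
    have "((\<lambda>d. G d t) has_field_derivative Gt d t) (at d)"
      unfolding G_def
      using pos[of t] d
      apply (auto intro!: derivative_eq_intros)
      apply (simp add: Gt_def)
      apply (rule alg2)
      using pos[of t] by (auto simp: add_nonneg_nonneg)
    then show ?thesis by (rule has_field_derivative_at_within)
  qed
  have int2: "G d integrable_on cbox 0 \<mu>" if "d \<in> U" for d
    unfolding G_def cbox_interval
    using Upos[OF that] pos
    by (intro integrable_continuous_interval continuous_intros) (auto simp: less_imp_neq[symmetric])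
  have cont: "continuous_on (U \<times> cbox 0 \<mu>) (\<lambda>(x, t). Gt x t)"
    unfolding Gt_def split_beta
    using pos Upos
    by (intro continuous_intros) (auto simp: less_imp_neq[symmetric])
  have DU: "T \<in> U" "convex U" "open U" using T by (auto simp: U_def)
  have L: "((\<lambda>d. integral (cbox 0 \<mu>) (G d)) has_field_derivative integral (cbox 0 \<mu>) (Gt T)) (at T within U)"
    by (rule leibniz_rule_field_derivative[OF fx int2 cont DU(1,2)])
  then have L2: "((\<lambda>d. integral {0..\<mu>} (G d)) has_real_derivative integral {0..\<mu>} (Gt T)) (at T)"
    using at_within_open[OF DU(1,3)] by (simp add: cbox_interval)
  have Jneg: "integral {0..\<mu>} (Gt T) < 0"
  proof (rule int_neg[OF _ m(1)])
    show "continuous_on {0..\<mu>} (Gt T)"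
      unfolding Gt_def using T pos
      by (intro continuous_intros) (auto simp: less_imp_neq[symmetric])
    fix x assume "x \<in> {0..\<mu>}"
    show "Gt T x < 0"
      unfolding Gt_def using T one_minus_tanh_sq_pos[of "sqrt (x\<^sup>2 + \<Delta>\<^sup>2) / (2 * T)"]
      by (simp add: divide_neg_pos)
  qed
  define a where "a = sqrt (\<xi>m\<^sup>2 + \<Delta>\<^sup>2)"
  define b where "b = sqrt (\<mu>\<^sup>2 + \<Delta>\<^sup>2)"
  have apos: "a > 0" and bpos: "b > 0" using pos by (auto simp: a_def b_def)
  have ab: "b < a" unfolding a_def b_def using m by (simp add: power_strict_mono)
  have H1: "((\<lambda>t. 2 * t * (ln (cosh (a / (2 * t))) - ln (cosh (b / (2 * t)))))
      has_real_derivative 2 * ((ln (cosh (a / (2 * T))) - a / (2 * T) * tanh (a / (2 * T)))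
          - (ln (cosh (b / (2 * T))) - b / (2 * T) * tanh (b / (2 * T))))) (at T)"
    using T
    apply (auto intro!: derivative_eq_intros)
    by (simp add: tanh_def field_simps)
  have D1neg: "2 * ((ln (cosh (a / (2 * T))) - a / (2 * T) * tanh (a / (2 * T)))
          - (ln (cosh (b / (2 * T))) - b / (2 * T) * tanh (b / (2 * T)))) < 0"
    using kdecr[of "b / (2 * T)" "a / (2 * T)"] T bpos ab by (simp add: divide_strict_right_mono)
  have eq: "(\<lambda>t. fgap \<xi>m \<mu> \<Delta> t) = (\<lambda>t. 2 * t * (ln (cosh (a / (2 * t))) - ln (cosh (b / (2 * t)))) + \<mu> * integral {0..\<mu>} (G t))"
    by (rule ext) (simp add: fgap_def ln_div G_def a_def b_def)
  have "((\<lambda>t. fgap \<xi>m \<mu> \<Delta> t) has_real_derivative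
          2 * ((ln (cosh (a / (2 * T))) - a / (2 * T) * tanh (a / (2 * T)))
          - (ln (cosh (b / (2 * T))) - b / (2 * T) * tanh (b / (2 * T)))) + \<mu> * integral {0..\<mu>} (Gt T)) (at T)"
    unfolding eq by (intro DERIV_add H1 DERIV_cmult L2)
  moreover have "2 * ((ln (cosh (a / (2 * T))) - a / (2 * T) * tanh (a / (2 * T)))
          - (ln (cosh (b / (2 * T))) - b / (2 * T) * tanh (b / (2 * T)))) + \<mu> * integral {0..\<mu>} (Gt T) < 0"
    using D1neg Jneg m by (simp add: add_neg_neg mult_pos_neg)
  ultimately show ?thesis by blast
qed



lemma int_bound:
  fixes h :: "real \<Rightarrow> real"
  assumes "\<mu> \<ge> 0" "\<And>x. x \<in> {0..\<mu>} \<Longrightarrow> 0 \<le> h x \<and> h x \<le> c"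
  shows "\<bar>integral {0..\<mu>} h\<bar> \<le> c * \<mu>"
proof (cases "h integrable_on {0..\<mu>}")
  case True
  have "integral {0..\<mu>} h \<le> integral {0..\<mu>} (\<lambda>_. c)"
    by (rule integral_le[OF True]) (use assms in auto)
  moreover have "0 \<le> integral {0..\<mu>} h"
    by (rule integral_nonneg[OF True]) (use assms in auto)
  ultimately show ?thesis using assms by (simp add: mult.commute)
next
  case False
  have "0 \<le> c" using assms(2)[of 0] assms(1) by auto
  then show ?thesis using False assms by (simp add: not_integrable_integral)
qed

lemma lim_T:
  fixes \<xi>m \<mu> \<Delta> :: real
  assumes m: "0 \<le> \<mu>" "\<mu> \<le> \<xi>m" and D: "\<Delta> \<ge> 0"
  shows "((\<lambda>t. fgap \<xi>m \<mu> \<Delta> t) \<longlongrightarrow> 0) at_top"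
proof (rule Lim_null_comparison)
  define a where "a = sqrt (\<xi>m\<^sup>2 + \<Delta>\<^sup>2)"
  define b where "b = sqrt (\<mu>\<^sup>2 + \<Delta>\<^sup>2)"
  have b0: "0 \<le> b" by (simp add: b_def)
  have ab: "b \<le> a" unfolding a_def b_def using m by (simp add: power_mono)
  define C where "C = (a\<^sup>2 + \<mu>\<^sup>2) / 2"
  show "((\<lambda>t. C / t) \<longlongrightarrow> 0) at_top"
    by (rule real_tendsto_divide_at_top[OF tendsto_const filterlim_ident])
  show "\<forall>\<^sub>F t in at_top. norm (fgap \<xi>m \<mu> \<Delta> t) \<le> C / t"
    unfolding eventually_at_top_linorder
  proof (intro exI[of _ 1] allI impI)
    fix t :: real assume "1 \<le> t"
    then have t: "t > 0" by simp
    have x0: "0 \<le> b / (2 * t)" "b / (2 * t) \<le> a / (2 * t)" using t b0 ab by (auto simp: divide_right_mono)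
    have L1: "ln (cosh (b / (2 * t))) \<le> ln (cosh (a / (2 * t)))" by (rule lncosh_mono[OF x0])
    have L2: "ln (cosh (a / (2 * t))) \<le> (a / (2 * t)) * tanh (a / (2 * t))"
      using x0 by (intro lncosh_le) auto
    have L3: "(a / (2 * t)) * tanh (a / (2 * t)) \<le> (a / (2 * t)) * (a / (2 * t))"
      using x0 by (intro mult_left_mono tanh_le_self) auto
    have F1: "\<bar>2 * t * ln (cosh (a / (2 * t)) / cosh (b / (2 * t)))\<bar> \<le> a\<^sup>2 / (2 * t)"
    proof -
      have "ln (cosh (a / (2 * t)) / cosh (b / (2 * t))) = ln (cosh (a / (2 * t))) - ln (cosh (b / (2 * t)))"
        by (simp add: ln_div)
      moreover have h1: "0 \<le> ln (cosh (a / (2 * t))) - ln (cosh (b / (2 * t)))" using L1 by linarith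
      moreover have h2: "ln (cosh (a / (2 * t))) - ln (cosh (b / (2 * t))) \<le> (a / (2 * t)) * (a / (2 * t))"
        using L2 L3 lncosh_nonneg[of "b / (2 * t)"] by linarith
      ultimately have "\<bar>2 * t * ln (cosh (a / (2 * t)) / cosh (b / (2 * t)))\<bar> \<le> 2 * t * ((a / (2 * t)) * (a / (2 * t)))"
        using t by (simp only: abs_mult abs_of_nonneg[OF h1]) (intro mult_mono h2, auto)
      also have "\<dots> = a\<^sup>2 / (2 * t)" using t by (simp add: field_simps power2_eq_square)
      finally show ?thesis .
    qed
    have F2: "\<bar>integral {0..\<mu>} (\<lambda>\<xi>. tanh (sqrt (\<xi>\<^sup>2 + \<Delta>\<^sup>2) / (2 * t)) / sqrt (\<xi>\<^sup>2 + \<Delta>\<^sup>2))\<bar> \<le> 1 / (2 * t) * \<mu>"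
    proof (rule int_bound[OF m(1)])
      fix x :: real
      define E where "E = sqrt (x\<^sup>2 + \<Delta>\<^sup>2)"
      have E0: "E \<ge> 0" by (simp add: E_def)
      have "0 \<le> tanh (E / (2 * t)) / E" using E0 t by simp
      moreover have "tanh (E / (2 * t)) / E \<le> 1 / (2 * t)"
      proof (cases "E = 0")
        case True then show ?thesis using t by simp
      next
        case False
        have "tanh (E / (2 * t)) \<le> E / (2 * t)" using E0 t by (intro tanh_le_self) simp
        then show ?thesis using False E0 t by (simp add: field_simps)
      qed
      ultimately show "0 \<le> tanh (sqrt (x\<^sup>2 + \<Delta>\<^sup>2) / (2 * t)) / sqrt (x\<^sup>2 + \<Delta>\<^sup>2) \<and>
          tanh (sqrt (x\<^sup>2 + \<Delta>\<^sup>2) / (2 * t)) / sqrt (x\<^sup>2 + \<Delta>\<^sup>2) \<le> 1 / (2 * t)"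
        by (simp add: E_def)
    qed
    define X where "X = 2 * t * ln (cosh (a / (2 * t)) / cosh (b / (2 * t)))"
    define I where "I = integral {0..\<mu>} (\<lambda>\<xi>. tanh (sqrt (\<xi>\<^sup>2 + \<Delta>\<^sup>2) / (2 * t)) / sqrt (\<xi>\<^sup>2 + \<Delta>\<^sup>2))"
    have eqf: "fgap \<xi>m \<mu> \<Delta> t = X + \<mu> * I" by (simp add: fgap_def X_def I_def a_def b_def)
    have mI: "\<bar>\<mu> * I\<bar> \<le> \<mu> * (1 / (2 * t) * \<mu>)"
      using mult_left_mono[OF F2 m(1)] m(1) unfolding I_def by (simp add: abs_mult)
    have "norm (fgap \<xi>m \<mu> \<Delta> t) \<le> a\<^sup>2 / (2 * t) + \<mu> * (1 / (2 * t) * \<mu>)"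
      unfolding eqf real_norm_def using abs_triangle_ineq[of X "\<mu> * I"] F1 mI unfolding X_def by linarith
    also have "\<dots> = C / t" using t by (simp add: C_def field_simps power2_eq_square)
    finally show "norm (fgap \<xi>m \<mu> \<Delta> t) \<le> C / t" .
  qed
qed

lemma lim_D:
  fixes \<xi>m \<mu> T :: real
  assumes m: "0 \<le> \<mu>" "\<mu> \<le> \<xi>m" and T: "T > 0"
  shows "((\<lambda>d. fgap \<xi>m \<mu> d T) \<longlongrightarrow> 0) at_top"
proof (rule Lim_null_comparison)
  define C where "C = \<xi>m\<^sup>2 + \<mu>\<^sup>2"
  show "((\<lambda>t. C / t) \<longlongrightarrow> 0) at_top"
    by (rule real_tendsto_divide_at_top[OF tendsto_const filterlim_ident])
  show "\<forall>\<^sub>F d in at_top. norm (fgap \<xi>m \<mu> d T) \<le> C / d"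
    unfolding eventually_at_top_linorder
  proof (intro exI[of _ 1] allI impI)
    fix d :: real assume "1 \<le> d"
    then have d: "d > 0" by simp
    define a where "a = sqrt (\<xi>m\<^sup>2 + d\<^sup>2)"
    define b where "b = sqrt (\<mu>\<^sup>2 + d\<^sup>2)"
    have b0: "d \<le> b" unfolding b_def by (rule real_le_rsqrt) simp
    have a0: "d \<le> a" unfolding a_def by (rule real_le_rsqrt) simp
    have ab: "b \<le> a" unfolding a_def b_def using m by (simp add: power_mono)
    have x0: "0 \<le> b / (2 * T)" "b / (2 * T) \<le> a / (2 * T)" using T b0 ab d by (auto simp: divide_right_mono)
    have L1: "ln (cosh (b / (2 * T))) \<le> ln (cosh (a / (2 * T)))" by (rule lncosh_mono[OF x0])
    have L2: "ln (cosh (a / (2 * T))) - ln (cosh (b / (2 * T))) \<le> a / (2 * T) - b / (2 * T)"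
      by (rule lncosh_lip[OF x0])
    have amb: "a - b \<le> \<xi>m\<^sup>2 / d"
    proof -
      have "(a - b) * (a + b) = a\<^sup>2 - b\<^sup>2" by (simp add: power2_eq_square algebra_simps)
      also have "\<dots> = \<xi>m\<^sup>2 - \<mu>\<^sup>2" unfolding a_def b_def by simp
      also have "\<dots> \<le> \<xi>m\<^sup>2" by simp
      finally have "(a - b) * (a + b) \<le> \<xi>m\<^sup>2" .
      moreover have "(a - b) * d \<le> (a - b) * (a + b)" using ab a0 b0 d by (intro mult_left_mono) auto
      ultimately have "(a - b) * d \<le> \<xi>m\<^sup>2" by linarith
      then show ?thesis using d by (simp add: field_simps)
    qed
    have F1: "\<bar>2 * T * ln (cosh (a / (2 * T)) / cosh (b / (2 * T)))\<bar> \<le> \<xi>m\<^sup>2 / d"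
    proof -
      have "ln (cosh (a / (2 * T)) / cosh (b / (2 * T))) = ln (cosh (a / (2 * T))) - ln (cosh (b / (2 * T)))"
        by (simp add: ln_div)
      then have "\<bar>2 * T * ln (cosh (a / (2 * T)) / cosh (b / (2 * T)))\<bar> \<le> 2 * T * (a / (2 * T) - b / (2 * T))"
        using L1 L2 T by (simp add: abs_le_iff mult_left_mono)
      also have "\<dots> = a - b" using T by (simp add: field_simps)
      finally show ?thesis using amb by linarith
    qed
    have F2: "\<bar>integral {0..\<mu>} (\<lambda>\<xi>. tanh (sqrt (\<xi>\<^sup>2 + d\<^sup>2) / (2 * T)) / sqrt (\<xi>\<^sup>2 + d\<^sup>2))\<bar> \<le> 1 / d * \<mu>"
    proof (rule int_bound[OF m(1)])
      fix x :: real
      define E where "E = sqrt (x\<^sup>2 + d\<^sup>2)"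
      have E0: "E \<ge> d" unfolding E_def by (rule real_le_rsqrt) simp
      have "0 \<le> tanh (E / (2 * T)) / E" using E0 T d by simp
      moreover have "tanh (E / (2 * T)) / E \<le> 1 / d"
      proof -
        have "tanh (E / (2 * T)) / E \<le> 1 / E"
          using tanh_real_lt_1[of "E / (2 * T)"] E0 d by (intro divide_right_mono) auto
        also have "\<dots> \<le> 1 / d" using E0 d by (simp add: frac_le)
        finally show ?thesis .
      qed
      ultimately show "0 \<le> tanh (sqrt (x\<^sup>2 + d\<^sup>2) / (2 * T)) / sqrt (x\<^sup>2 + d\<^sup>2) \<and>
          tanh (sqrt (x\<^sup>2 + d\<^sup>2) / (2 * T)) / sqrt (x\<^sup>2 + d\<^sup>2) \<le> 1 / d"
        by (simp add: E_def)
    qed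
    define X where "X = 2 * T * ln (cosh (a / (2 * T)) / cosh (b / (2 * T)))"
    define I where "I = integral {0..\<mu>} (\<lambda>\<xi>. tanh (sqrt (\<xi>\<^sup>2 + d\<^sup>2) / (2 * T)) / sqrt (\<xi>\<^sup>2 + d\<^sup>2))"
    have eqf: "fgap \<xi>m \<mu> d T = X + \<mu> * I" by (simp add: fgap_def X_def I_def a_def b_def)
    have mI: "\<bar>\<mu> * I\<bar> \<le> \<mu> * (1 / d * \<mu>)"
      using mult_left_mono[OF F2 m(1)] m(1) unfolding I_def by (simp add: abs_mult)
    have "norm (fgap \<xi>m \<mu> d T) \<le> \<xi>m\<^sup>2 / d + \<mu> * (1 / d * \<mu>)"
      unfolding eqf real_norm_def using abs_triangle_ineq[of X "\<mu> * I"] F1 mI unfolding X_def by linarith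
    also have "\<dots> = C / d" using d by (simp add: C_def field_simps power2_eq_square)
    finally show "norm (fgap \<xi>m \<mu> d T) \<le> C / d" .
  qed
qed


theorem mainTheorem4:
  fixes \<xi>m :: real
  assumes "\<xi>m > 0"
  shows "(\<forall>\<mu> \<Delta> T. 0 < \<mu> \<and> \<mu> < \<xi>m \<and> \<Delta> > 0 \<and> T > 0 \<longrightarrow>
            (\<exists>D. ((\<lambda>m. fgap \<xi>m m \<Delta> T) has_real_derivative D) (at \<mu>) \<and> D > 0) \<and>
            (\<exists>D. ((\<lambda>d. fgap \<xi>m \<mu> d T) has_real_derivative D) (at \<Delta>) \<and> D < 0) \<and>
            (\<exists>D. ((\<lambda>t. fgap \<xi>m \<mu> \<Delta> t) has_real_derivative D) (at T) \<and> D < 0))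
       \<and> (\<forall>\<mu> \<Delta>. 0 \<le> \<mu> \<and> \<mu> \<le> \<xi>m \<and> \<Delta> \<ge> 0 \<longrightarrow>
            ((\<lambda>t. fgap \<xi>m \<mu> \<Delta> t) \<longlongrightarrow> 0) at_top)
       \<and> (\<forall>\<mu> T. 0 \<le> \<mu> \<and> \<mu> \<le> \<xi>m \<and> T > 0 \<longrightarrow>
            ((\<lambda>d. fgap \<xi>m \<mu> d T) \<longlongrightarrow> 0) at_top)"
proof (intro conjI allI impI)
  fix \<mu> \<Delta> T :: real
  assume H: "0 < \<mu> \<and> \<mu> < \<xi>m \<and> \<Delta> > 0 \<and> T > 0"
  then have m: "0 < \<mu>" "\<mu> < \<xi>m" and D: "\<Delta> > 0" and T: "T > 0" by auto
  have pos: "\<And>x. sqrt (x\<^sup>2 + \<Delta>\<^sup>2) > 0" using D by (simp add: add_nonneg_pos)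
  have "integral {0..\<mu>} (\<lambda>\<xi>. tanh (sqrt (\<xi>\<^sup>2 + \<Delta>\<^sup>2) / (2 * T)) / sqrt (\<xi>\<^sup>2 + \<Delta>\<^sup>2)) > 0"
  proof (rule int_pos[OF _ m(1)])
    show "continuous_on {0..\<mu>} (\<lambda>\<xi>. tanh (sqrt (\<xi>\<^sup>2 + \<Delta>\<^sup>2) / (2 * T)) / sqrt (\<xi>\<^sup>2 + \<Delta>\<^sup>2))"
      using pos T by (intro continuous_intros) (auto simp: less_imp_neq[symmetric])
    fix x show "tanh (sqrt (x\<^sup>2 + \<Delta>\<^sup>2) / (2 * T)) / sqrt (x\<^sup>2 + \<Delta>\<^sup>2) > 0"
      using pos[of x] T by simp
  qed
  then show "\<exists>D. ((\<lambda>m. fgap \<xi>m m \<Delta> T) has_real_derivative D) (at \<mu>) \<and> D > 0"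
    using deriv_mu[OF D T m] by blast
  show "\<exists>D. ((\<lambda>d. fgap \<xi>m \<mu> d T) has_real_derivative D) (at \<Delta>) \<and> D < 0"
    by (rule deriv_D[OF D T m])
  show "\<exists>D. ((\<lambda>t. fgap \<xi>m \<mu> \<Delta> t) has_real_derivative D) (at T) \<and> D < 0"
    by (rule deriv_T[OF D T m])
next
  fix \<mu> \<Delta> :: real assume "0 \<le> \<mu> \<and> \<mu> \<le> \<xi>m \<and> \<Delta> \<ge> 0"
  then show "((\<lambda>t. fgap \<xi>m \<mu> \<Delta> t) \<longlongrightarrow> 0) at_top" using lim_T by blast
next
  fix \<mu> T :: real assume "0 \<le> \<mu> \<and> \<mu> \<le> \<xi>m \<and> T > 0"
  then show "((\<lambda>d. fgap \<xi>m \<mu> d T) \<longlongrightarrow> 0) at_top" using lim_D by blast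
qed

end
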